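(* Assume the CFL condition $0\le\lambda\sup_{w\ge1}W'(w)\le1$. Let $(y^0_i)_{i\in\mathbb Z}$ be a bounded sequence with $y^0_i\ge1$, and define recursively for $n\ge0$ $$w^n_i=\sum_{j\ge i}\Phi_{ij\alpha}y^n_j,\qquad y^{n+1}_i=y^n_i+\lambda\bigl(W(w^n_{i+1})-W(w^n_i)\bigr),\quad i\in\mathbb Z.$$ Then for every $\alpha>0$, every $i\in\mathbb Z$ and every $n\ge0$, $$\inf_{j\in\mathbb Z}y^0_j\le y^n_i\le\sup_{j\in\mathbb Z}y^0_j.$$
   Context: Kernel: $\Phi:[0,\infty)\to[0,\infty)$ is non-increasing with $\int_0^\infty\Phi(z)\,dz=1$ and $\int_0^\infty z\Phi(z)\,dz<\infty$; for $\alpha>0$, $\Phi_\alpha(z)=\alpha^{-1}\Phi(z/\alpha)$. Flux: $V\in C^1([0,\infty))$ is non-increasing and $W:[1,\infty)\to\mathbb R$, $W(w)=V(1/w)$. Discretization: $\Delta z>0$, $\Delta t>0$, $\lambda=\Delta t/\Delta z$, $z_j=(j-\tfrac12)\Delta z$ for $j\in\tfrac12\mathbb Z$, and for integers $j\ge i$, $\Phi_{ij\alpha}=\int_{z_{j-1/2}}^{z_{j+1/2}}\Phi_\alpha(\zeta-z_{i-1/2})\,d\zeta$. *)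

theory Defs
  imports "HOL-Analysis.Analysis"
begin

definition Phi_scaled :: "(real \<Rightarrow> real) \<Rightarrow> real \<Rightarrow> real \<Rightarrow> real" where
  "Phi_scaled Phi \<alpha> z = Phi (z / \<alpha>) / \<alpha>"

definition zgrid :: "real \<Rightarrow> real \<Rightarrow> real" where
  "zgrid dz j = (j - 1/2) * dz"

definition Phi_ij :: "(real \<Rightarrow> real) \<Rightarrow> real \<Rightarrow> real \<Rightarrow> int \<Rightarrow> int \<Rightarrow> real" where
  "Phi_ij Phi \<alpha> dz i j =
     integral {zgrid dz (real_of_int j - 1/2) .. zgrid dz (real_of_int j + 1/2)}
       (\<lambda>\<zeta>. Phi_scaled Phi \<alpha> (\<zeta> - zgrid dz (real_of_int i - 1/2)))"

text \<open>W(w) = V(1/w) (meaningful for w >= 1).\<close>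
definition Wflux :: "(real \<Rightarrow> real) \<Rightarrow> real \<Rightarrow> real" where
  "Wflux V w = V (1 / w)"

end

theory Submission
  imports Defs
begin



lemma W_deriv:
  assumes V_deriv: "\<And>x. 0 \<le> x \<Longrightarrow> (V has_real_derivative V' x) (at x within {0..})"
    and u: "1 \<le> u"
  shows "(Wflux V has_real_derivative (- V' (1/u) / u^2)) (at u)"
proof -
  have u0: "0 < u" using u by simp
  have "(V has_real_derivative V' (1/u)) (at (1/u))"
    using V_deriv[of "1/u"] u0 at_within_interior[of "1/u" "{0..}"] by simp
  moreover have "((\<lambda>x. 1/x) has_real_derivative (- 1 / u^2)) (at u)"
    using u0 by (auto intro!: derivative_eq_intros simp: power2_eq_square field_simps)
  ultimately have "((\<lambda>x. V (1/x)) has_real_derivative V' (1/u) * (- 1 / u^2)) (at u)"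
    using DERIV_chain2 by blast
  then show ?thesis unfolding Wflux_def[abs_def] by simp
qed

lemma W_bounds:
  assumes V_deriv: "\<And>x. 0 \<le> x \<Longrightarrow> (V has_real_derivative V' x) (at x within {0..})"
    and V'_cont: "continuous_on {0..} V'"
    and V_mono: "\<And>x z. 0 \<le> x \<Longrightarrow> x \<le> z \<Longrightarrow> V z \<le> V x"
    and ab: "1 \<le> a" "a \<le> b"
  shows "0 \<le> Wflux V b - Wflux V a"
    "Wflux V b - Wflux V a \<le> (SUP u\<in>{1..}. deriv (Wflux V) u) * (b - a)"
proof -
  show "0 \<le> Wflux V b - Wflux V a"
    using V_mono[of "1/b" "1/a"] ab by (simp add: Wflux_def frac_le)
  have "compact (V' ` {0..1})"
    by (rule compact_continuous_image) (auto intro: continuous_on_subset[OF V'_cont])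
  then have "bounded (V' ` {0..1})" by (rule compact_imp_bounded)
  then obtain B where B0: "\<forall>x\<in>V' ` {0..1}. \<bar>x\<bar> \<le> B" unfolding bounded_real by blast
  have B: "\<bar>V' x\<bar> \<le> B" if "x \<in> {0..1}" for x using B0 that by blast
  have dW: "deriv (Wflux V) u = - V' (1/u) / u^2" if "1 \<le> u" for u
    using W_deriv[OF V_deriv that] by (rule DERIV_imp_deriv)
  have bdd: "bdd_above ((\<lambda>u. deriv (Wflux V) u) ` {1..})"
  proof (rule bdd_aboveI2)
    fix u :: real assume "u \<in> {1..}"
    then have u: "1 \<le> u" by simp
    have "\<bar>V' (1/u)\<bar> \<le> B" using B u by simp
    moreover have "u^2 \<ge> 1" using u by (simp add: one_le_power)
    ultimately have "\<bar>V' (1/u)\<bar> / u^2 \<le> B"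
    proof -
      have "\<bar>V' (1/u)\<bar> / u^2 \<le> \<bar>V' (1/u)\<bar> / 1"
        using \<open>u^2 \<ge> 1\<close> by (intro divide_left_mono) auto
      then show ?thesis using \<open>\<bar>V' (1/u)\<bar> \<le> B\<close> by simp
    qed
    moreover have "deriv (Wflux V) u \<le> \<bar>V' (1/u)\<bar> / u^2"
    proof -
      have "- V' (1/u) / u^2 \<le> \<bar>V' (1/u)\<bar> / u^2"
        by (rule divide_right_mono) auto
      then show ?thesis using dW[OF u] by simp
    qed
    ultimately show "deriv (Wflux V) u \<le> B" by linarith
  qed
  show "Wflux V b - Wflux V a \<le> (SUP u\<in>{1..}. deriv (Wflux V) u) * (b - a)"
  proof (cases "a = b")
    case True then show ?thesis by simp
  next
    case False
    then have "a < b" using ab by simp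
    have der: "DERIV (Wflux V) x :> - V' (1/x) / x^2" if "a \<le> x" "x \<le> b" for x
    proof -
      have "1 \<le> x" using ab that by linarith
      from W_deriv[OF V_deriv this] show ?thesis by simp
    qed
    obtain z where z: "a < z" "z < b" "Wflux V b - Wflux V a = (b - a) * (- V' (1/z) / z^2)"
      using MVT2[OF \<open>a < b\<close> der] by blast
    have "- V' (1/z) / z^2 = deriv (Wflux V) z" using dW z ab by simp
    also have "\<dots> \<le> (SUP u\<in>{1..}. deriv (Wflux V) u)"
      using z ab by (intro cSUP_upper[OF _ bdd]) auto
    finally have le: "- V' (1/z) / z^2 \<le> (SUP u\<in>{1..}. deriv (Wflux V) u)" .
    have "(b - a) * (- V' (1/z) / z^2) \<le> (b - a) * (SUP u\<in>{1..}. deriv (Wflux V) u)"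
      using le \<open>a < b\<close> by (intro mult_left_mono) auto
    then show ?thesis using z(3) by (metis mult.commute)
  qed
qed

lemma int_affine:
  fixes f :: "real \<Rightarrow> real"
  assumes "(f has_integral I) {A..B}" "\<alpha> > 0"
  shows "((\<lambda>\<zeta>. f ((\<zeta> - s)/\<alpha>)/\<alpha>) has_integral I) {\<alpha>*A + s .. \<alpha>*B + s}"
proof -
  have h1: "((\<lambda>x. f ((1/\<alpha>) *\<^sub>R x + (-s/\<alpha>))) has_integral (I /\<^sub>R (1/\<alpha>) ^ DIM(real)))
           (cbox ((A - (-s/\<alpha>)) /\<^sub>R (1/\<alpha>)) ((B - (-s/\<alpha>)) /\<^sub>R (1/\<alpha>)))"
    using assms by (intro has_integral_affinity') auto
  have e1: "(\<lambda>x. f ((1/\<alpha>) *\<^sub>R x + (-s/\<alpha>))) = (\<lambda>x. f ((x - s)/\<alpha>))"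
    by (rule ext) (simp add: diff_divide_distrib)
  have e2: "I /\<^sub>R (1/\<alpha>) ^ DIM(real) = I * \<alpha>" by simp
  have e3: "cbox ((A - (-s/\<alpha>)) /\<^sub>R (1/\<alpha>)) ((B - (-s/\<alpha>)) /\<^sub>R (1/\<alpha>)) = {\<alpha>*A + s .. \<alpha>*B + s}"
    using assms(2) by (simp add: cbox_interval field_simps)
  from h1 have "((\<lambda>x. f ((x - s)/\<alpha>)) has_integral (I * \<alpha>)) {\<alpha>*A + s .. \<alpha>*B + s}"
    by (simp only: e1 e2 e3)
  from has_integral_mult_left[OF this, of "1/\<alpha>"] have
    "((\<lambda>x. f ((x - s)/\<alpha>) * (1/\<alpha>)) has_integral (I * \<alpha> * (1/\<alpha>))) {\<alpha>*A + s .. \<alpha>*B + s}" .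
  then show ?thesis using assms(2) by simp
qed




lemma c_facts:
  fixes Phi :: "real \<Rightarrow> real" and h :: real
  assumes Phi_nonneg: "\<And>z. 0 \<le> z \<Longrightarrow> 0 \<le> Phi z"
    and Phi_mono: "\<And>x z. 0 \<le> x \<Longrightarrow> x \<le> z \<Longrightarrow> Phi z \<le> Phi x"
    and Phi_int: "(Phi has_integral 1) {0..}"
    and h: "h > 0"
    and c_def: "c = (\<lambda>k::nat. integral {real k * h .. real (Suc k) * h} Phi)"
  shows "\<And>k. (Phi has_integral c k) {real k * h .. real (Suc k) * h}"
    and "\<And>k. 0 \<le> c k"
    and "\<And>k. c (Suc k) \<le> c k"
    and "c sums 1"
proof -
  have intg: "Phi integrable_on {a..b}" if "0 \<le> a" for a b
  proof (rule integrable_on_subinterval[of _ "{0..}"])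
    show "Phi integrable_on {0..}" using Phi_int by (rule has_integral_integrable)
    show "{a..b} \<subseteq> {0..}" using that by auto
  qed
  show ci: "(Phi has_integral c k) {real k * h .. real (Suc k) * h}" for k
  proof -
    have "0 \<le> real k * h" using h by simp
    from intg[OF this] show ?thesis unfolding c_def by (rule integrable_integral)
  qed
  show "0 \<le> c k" for k
  proof (rule has_integral_nonneg[OF ci])
    fix x assume "x \<in> {real k * h .. real (Suc k) * h}"
    moreover have "0 \<le> real k * h" using h by simp
    ultimately show "0 \<le> Phi x" using Phi_nonneg by auto
  qed
  show "c (Suc k) \<le> c k" for k
  proof -
    have "((\<lambda>x. Phi (x + h)) has_integral c (Suc k)) {real (Suc k) * h - h .. real (Suc (Suc k)) * h - h}"
      by (rule has_integral_shift_real_ivl[OF ci])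
    moreover have "real (Suc k) * h - h = real k * h" "real (Suc (Suc k)) * h - h = real (Suc k) * h"
      by (simp_all add: algebra_simps)
    ultimately have "((\<lambda>x. Phi (x + h)) has_integral c (Suc k)) {real k * h .. real (Suc k) * h}"
      by simp
    then show ?thesis
    proof (rule has_integral_le[OF _ ci])
      fix x assume x: "x \<in> {real k * h .. real (Suc k) * h}"
      have "0 \<le> real k * h" using h by simp
      then have "0 \<le> x" using x by auto
      then show "Phi (x + h) \<le> Phi x" using h Phi_mono[of x "x + h"] by auto
    qed
  qed
  have psum: "(\<Sum>k<n. c k) = integral {0 .. real n * h} Phi" for n
  proof (induction n)
    case 0 then show ?case by simp
  next
    case (Suc n)
    have "integral {0 .. real n * h} Phi + integral {real n * h .. real (Suc n) * h} Phi
          = integral {0 .. real (Suc n) * h} Phi"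
    proof (rule Henstock_Kurzweil_Integration.integral_combine)
      show "0 \<le> real n * h" using h by simp
      show "real n * h \<le> real (Suc n) * h" using h by (intro mult_right_mono) auto
      show "Phi integrable_on {0..real (Suc n) * h}" by (rule intg) simp
    qed
    then show ?case using Suc by (simp add: c_def)
  qed
  define f where "f = (\<lambda>k::nat. \<lambda>x. if x \<in> {0 .. real k * h} then Phi x else 0)"
  have fint: "integral {0..} (f k) = integral {0 .. real k * h} Phi" for k
  proof -
    have "{0 .. real k * h} \<inter> {0..} = {0 .. real k * h}" by auto
    then show ?thesis unfolding f_def integral_restrict_Int by simp
  qed
  have mc: "Phi integrable_on {0..} \<and> ((\<lambda>k. integral {0..} (f k)) \<longlongrightarrow> integral {0..} Phi) sequentially"
  proof (rule monotone_convergence_increasing)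
    show "f k integrable_on {0..}" for k
    proof -
      have "{0 .. real k * h} \<inter> {0..} = {0 .. real k * h}" by auto
      then show ?thesis unfolding f_def integrable_restrict_Int using intg[of 0 "real k * h"] by simp
    qed
    show "f k x \<le> f (Suc k) x" if "x \<in> {0..}" for k x
    proof -
      have "real k * h \<le> real (Suc k) * h" using h by (intro mult_right_mono) auto
      then have "x \<le> real k * h \<Longrightarrow> x \<le> real (Suc k) * h" by linarith
      then show ?thesis using that h Phi_nonneg[of x] unfolding f_def by (auto simp del: of_nat_Suc)
    qed
    show "((\<lambda>k. f k x) \<longlongrightarrow> Phi x) sequentially" if "x \<in> {0..}" for x
    proof (rule tendsto_eventually)
      obtain N where N: "x < real N * h" using ex_less_of_nat_mult[OF h] by blast
      show "\<forall>\<^sub>F k in sequentially. f k x = Phi x"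
      proof (rule eventually_sequentiallyI[of N])
        fix k assume "N \<le> k"
        then have "real N * h \<le> real k * h" using h by (intro mult_right_mono) auto
        then show "f k x = Phi x" using N that by (auto simp: f_def)
      qed
    qed
    have "integral {0..} (f k) \<in> {0..1}" for k
    proof -
      have "0 \<le> integral {0 .. real k * h} Phi"
        using Phi_nonneg by (intro integral_nonneg intg) auto
      moreover have "integral {0 .. real k * h} Phi \<le> integral {0..} Phi"
      proof (rule integral_subset_le)
        show "{0 .. real k * h} \<subseteq> {0..}" by auto
        show "Phi integrable_on {0 .. real k * h}" by (rule intg) simp
        show "Phi integrable_on {0..}" using Phi_int by (rule has_integral_integrable)
        show "\<forall>x\<in>{0..}. 0 \<le> Phi x" using Phi_nonneg by auto
      qed
      moreover have "integral {0..} Phi = 1" using Phi_int by (rule integral_unique)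
      ultimately show ?thesis using fint[of k] by simp
    qed
    then have "range (\<lambda>k. integral {0..} (f k)) \<subseteq> {0..1}" by blast
    moreover have "bounded {0..(1::real)}" by (rule compact_imp_bounded[OF compact_Icc])
    ultimately show "bounded (range (\<lambda>k. integral {0..} (f k)))" using bounded_subset by blast
  qed
  show "c sums 1"
  proof -
    have "(\<lambda>k. integral {0..} (f k)) = (\<lambda>n. \<Sum>k<n. c k)" by (simp add: fint psum)
    moreover have "integral {0..} Phi = 1" using Phi_int by (rule integral_unique)
    ultimately show ?thesis unfolding sums_def using mc by simp
  qed
qed




lemma phi_val:
  fixes Phi :: "real \<Rightarrow> real"
  assumes "(Phi has_integral I) {real k * (dz/\<alpha>) .. real (Suc k) * (dz/\<alpha>)}" "\<alpha> > 0"
  shows "Phi_ij Phi \<alpha> dz i (i + int k) = I"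
proof -
  have "((\<lambda>\<zeta>. Phi ((\<zeta> - (real_of_int i - 1) * dz)/\<alpha>)/\<alpha>) has_integral I)
     {\<alpha>*(real k * (dz/\<alpha>)) + (real_of_int i - 1) * dz .. \<alpha>*(real (Suc k) * (dz/\<alpha>)) + (real_of_int i - 1) * dz}"
    by (rule int_affine[OF assms])
  moreover have "\<alpha>*(real k * (dz/\<alpha>)) + (real_of_int i - 1) * dz = zgrid dz (real_of_int (i + int k) - 1/2)"
    "\<alpha>*(real (Suc k) * (dz/\<alpha>)) + (real_of_int i - 1) * dz = zgrid dz (real_of_int (i + int k) + 1/2)"
    using assms(2) by (simp_all add: zgrid_def field_simps)
  moreover have "(\<lambda>\<zeta>. Phi ((\<zeta> - (real_of_int i - 1) * dz)/\<alpha>)/\<alpha>) =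
      (\<lambda>\<zeta>. Phi_scaled Phi \<alpha> (\<zeta> - zgrid dz (real_of_int i - 1/2)))"
    by (simp add: Phi_scaled_def zgrid_def)
  ultimately show ?thesis unfolding Phi_ij_def by (simp add: integral_unique)
qed

lemma final_step:
  fixes a b yi cz lam L m M Wa Wb :: real
  assumes "0 \<le> lam * L" "lam * L \<le> 1" "lam > 0" "0 \<le> cz" "cz \<le> 1" "m \<le> yi" "yi \<le> M"
    and "b - a \<le> cz * (M - yi)" "cz * (m - yi) \<le> b - a"
    and up: "a \<le> b \<Longrightarrow> 0 \<le> Wb - Wa \<and> Wb - Wa \<le> L * (b - a)"
    and down: "b \<le> a \<Longrightarrow> 0 \<le> Wa - Wb \<and> Wa - Wb \<le> L * (a - b)"
  shows "m \<le> yi + lam * (Wb - Wa) \<and> yi + lam * (Wb - Wa) \<le> M"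
proof (cases "a \<le> b")
  case True
  from up[OF True] have w: "0 \<le> Wb - Wa" "Wb - Wa \<le> L * (b - a)" by auto
  have "lam * (Wb - Wa) \<le> lam * (L * (b - a))" using w assms by (intro mult_left_mono) auto
  also have "\<dots> = (lam * L) * (b - a)" by simp
  also have "\<dots> \<le> (lam * L) * (cz * (M - yi))" using assms by (intro mult_left_mono) auto
  also have "\<dots> \<le> cz * (M - yi)" using assms by (intro mult_left_le_one_le) auto
  also have "\<dots> \<le> M - yi" using assms by (intro mult_left_le_one_le) auto
  finally have "lam * (Wb - Wa) \<le> M - yi" .
  moreover have "0 \<le> lam * (Wb - Wa)" using w assms by simp
  ultimately show ?thesis using assms by linarith
next
  case False
  then have ba: "b \<le> a" by simp
  from down[OF ba] have w: "0 \<le> Wa - Wb" "Wa - Wb \<le> L * (a - b)" by auto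
  have "lam * (Wa - Wb) \<le> lam * (L * (a - b))" using w assms by (intro mult_left_mono) auto
  also have "\<dots> = (lam * L) * (a - b)" by simp
  also have "\<dots> \<le> (lam * L) * (cz * (yi - m))" using assms by (intro mult_left_mono) (auto simp: algebra_simps)
  also have "\<dots> \<le> cz * (yi - m)" using assms by (intro mult_left_le_one_le) auto
  also have "\<dots> \<le> yi - m" using assms by (intro mult_left_le_one_le) auto
  finally have "lam * (Wa - Wb) \<le> yi - m" .
  moreover have "0 \<le> lam * (Wa - Wb)" using w assms by simp
  moreover have "lam * (Wb - Wa) = - (lam * (Wa - Wb))" by (simp add: algebra_simps)
  ultimately show ?thesis using assms by linarith
qed




theorem lemma3p1:
  fixes Phi V V' :: "real \<Rightarrow> real"
    and dz dt \<alpha> :: real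
    and y0 :: "int \<Rightarrow> real"
    and y w :: "nat \<Rightarrow> int \<Rightarrow> real"
  assumes Phi_nonneg: "\<And>z. 0 \<le> z \<Longrightarrow> 0 \<le> Phi z"
    and Phi_mono: "\<And>x z. 0 \<le> x \<Longrightarrow> x \<le> z \<Longrightarrow> Phi z \<le> Phi x"
    and Phi_int: "(Phi has_integral 1) {0..}"
    and Phi_moment: "(\<lambda>z. z * Phi z) integrable_on {0..}"
    and V_deriv: "\<And>x. 0 \<le> x \<Longrightarrow> (V has_real_derivative V' x) (at x within {0..})"
    and V'_cont: "continuous_on {0..} V'"
    and V_mono: "\<And>x z. 0 \<le> x \<Longrightarrow> x \<le> z \<Longrightarrow> V z \<le> V x"
    and dz_pos: "dz > 0" and dt_pos: "dt > 0"
    and CFL: "0 \<le> (dt / dz) * (SUP u\<in>{1..}. deriv (Wflux V) u)"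
             "(dt / dz) * (SUP u\<in>{1..}. deriv (Wflux V) u) \<le> 1"
    and y0_bdd: "bdd_above (range y0)"
    and y0_ge1: "\<And>i. y0 i \<ge> 1"
    and alpha_pos: "\<alpha> > 0"
    and y_init: "\<And>i. y 0 i = y0 i"
    and w_def: "\<And>n i. w n i = (\<Sum>\<^sub>\<infinity>j\<in>{i..}. Phi_ij Phi \<alpha> dz i j * y n j)"
    and y_step: "\<And>n i. y (Suc n) i =
                   y n i + (dt / dz) * (Wflux V (w n (i + 1)) - Wflux V (w n i))"
  shows "\<forall>n i. (INF j. y0 j) \<le> y n i \<and> y n i \<le> (SUP j. y0 j)"
proof -
  define h where "h = dz / \<alpha>"
  have h: "h > 0" using dz_pos alpha_pos by (simp add: h_def)
  define c where "c = (\<lambda>k::nat. integral {real k * h .. real (Suc k) * h} Phi)"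
  note cf = c_facts[OF Phi_nonneg Phi_mono Phi_int h c_def]
  have cval: "Phi_ij Phi \<alpha> dz i (i + int k) = c k" for i k
    using phi_val[OF cf(1)[of k, unfolded h_def] alpha_pos] .
  define m where "m = (INF j. y0 j)"
  define M where "M = (SUP j. y0 j)"
  have bdb: "bdd_below (range y0)" using y0_ge1 by (intro bdd_belowI2) auto
  have m1: "1 \<le> m" unfolding m_def using y0_ge1 by (intro cINF_greatest) auto
  define L where "L = (SUP u\<in>{1..}. deriv (Wflux V) u)"
  define lam where "lam = dt / dz"
  have lam: "lam > 0" using dt_pos dz_pos by (simp add: lam_def)
  have c0: "0 \<le> c 0" "c 0 \<le> 1"
  proof -
    show "0 \<le> c 0" by (rule cf(2))
    have "summable c" using cf(4) by (simp add: sums_iff)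
    then have "sum c {0} \<le> suminf c"
      by (rule sum_le_suminf) (simp_all add: cf(2))
    then show "c 0 \<le> 1" using cf(4) by (simp add: sums_iff)
  qed
  have cdiff: "(\<lambda>k. c k - c (Suc k)) sums c 0"
  proof -
    have "(\<lambda>k. c (Suc k)) sums (1 - c 0)" using cf(4) by (simp add: sums_Suc_iff)
    from sums_diff[OF cf(4) this] show ?thesis by simp
  qed
  have main: "\<forall>i. m \<le> y n i \<and> y n i \<le> M" for n
  proof (induction n)
    case 0
    show ?case unfolding m_def M_def y_init
      using bdb y0_bdd by (auto intro: cINF_lower cSUP_upper)
  next
    case (Suc n)
    have ybd: "m \<le> y n j" "y n j \<le> M" for j using Suc by auto
    have y0: "0 \<le> y n j" for j using ybd(1)[of j] m1 by simp
    have wsum: "(\<lambda>k. c k * y n (i + int k)) sums w n i" for i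
    proof -
      let ?F = "\<lambda>k. c k * y n (i + int k)"
      have "(\<lambda>k. c k * M) sums (1 * M)" by (rule sums_mult2[OF cf(4)])
      then have sg: "summable (\<lambda>k. c k * M)" by (simp add: sums_iff)
      have Fnn: "0 \<le> ?F k" for k using cf(2)[of k] y0 by simp
      have "norm (?F k) \<le> c k * M" for k
      proof -
        have "norm (?F k) = ?F k" using Fnn[of k] by simp
        also have "\<dots> \<le> c k * M" using cf(2)[of k] ybd(2) by (rule mult_left_mono[rotated])
        finally show ?thesis .
      qed
      then have "summable ?F" by (intro summable_comparison_test'[OF sg])
      then have "?F sums suminf ?F" by (rule summable_sums)
      then have hs: "(?F has_sum suminf ?F) UNIV"
        by (rule sums_nonneg_imp_has_sum) (rule Fnn)
      have bij: "bij_betw (\<lambda>k::nat. i + int k) UNIV {i..}"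
        by (rule bij_betwI[of _ _ _ "\<lambda>j. nat (j - i)"]) auto
      have "w n i = (\<Sum>\<^sub>\<infinity>k\<in>UNIV. Phi_ij Phi \<alpha> dz i (i + int k) * y n (i + int k))"
        unfolding w_def by (rule infsum_reindex_bij_betw[OF bij, symmetric])
      also have "\<dots> = (\<Sum>\<^sub>\<infinity>k\<in>UNIV. ?F k)" by (simp add: cval)
      also have "\<dots> = suminf ?F" using hs by (rule infsumI)
      finally show ?thesis using \<open>summable ?F\<close> by (simp add: sums_iff)
    qed
    have wge: "m \<le> w n i" for i
    proof -
      have "(\<lambda>k. c k * m) sums (1 * m)" by (rule sums_mult2[OF cf(4)])
      from sums_le[OF _ this wsum] show ?thesis
        using cf(2) ybd by (simp add: mult_left_mono)
    qed
    show ?case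
    proof
      fix i
      let ?G = "\<lambda>k. c (Suc k) * y n (i + 1 + int k)"
      have G: "?G sums (w n i - c 0 * y n i)"
      proof -
        have "(\<lambda>k. c (Suc k) * y n (i + int (Suc k))) sums (w n i - c 0 * y n i)"
          using wsum[of i] by (subst sums_Suc_iff) simp
        moreover have "i + int (Suc k) = i + 1 + int k" for k by simp
        ultimately show ?thesis by (simp add: add.assoc)
      qed
      have D: "(\<lambda>k. (c k - c (Suc k)) * y n (i + 1 + int k)) sums (w n (i+1) - (w n i - c 0 * y n i))"
        using sums_diff[OF wsum[of "i+1"] G] by (simp add: algebra_simps)
      have up: "w n (i+1) - (w n i - c 0 * y n i) \<le> c 0 * M"
      proof -
        have "(\<lambda>k. (c k - c (Suc k)) * M) sums (c 0 * M)" by (rule sums_mult2[OF cdiff])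
        from sums_le[OF _ D this] show ?thesis
          using cf(3) ybd by (simp add: mult_left_mono)
      qed
      have lo: "c 0 * m \<le> w n (i+1) - (w n i - c 0 * y n i)"
      proof -
        have "(\<lambda>k. (c k - c (Suc k)) * m) sums (c 0 * m)" by (rule sums_mult2[OF cdiff])
        from sums_le[OF _ this D] show ?thesis
          using cf(3) ybd by (simp add: mult_left_mono)
      qed
      have W: "0 \<le> Wflux V b - Wflux V a \<and> Wflux V b - Wflux V a \<le> L * (b - a)"
        if "1 \<le> a" "a \<le> b" for a b
        using W_bounds[OF V_deriv V'_cont V_mono that] unfolding L_def by auto
      have "m \<le> y n i + lam * (Wflux V (w n (i+1)) - Wflux V (w n i)) \<and>
            y n i + lam * (Wflux V (w n (i+1)) - Wflux V (w n i)) \<le> M"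
      proof (rule final_step[where a = "w n i" and b = "w n (i+1)" and cz = "c 0" and L = L])
        show "0 \<le> lam * L" "lam * L \<le> 1" using CFL unfolding lam_def L_def by auto
        show "0 < lam" "0 \<le> c 0" "c 0 \<le> 1" "m \<le> y n i" "y n i \<le> M" using lam c0 ybd by auto
        show "w n (i + 1) - w n i \<le> c 0 * (M - y n i)" using up by (simp add: algebra_simps)
        show "c 0 * (m - y n i) \<le> w n (i + 1) - w n i" using lo by (simp add: algebra_simps)
        show "w n i \<le> w n (i + 1) \<Longrightarrow>
          0 \<le> Wflux V (w n (i + 1)) - Wflux V (w n i) \<and>
          Wflux V (w n (i + 1)) - Wflux V (w n i) \<le> L * (w n (i + 1) - w n i)"
          using W[of "w n i" "w n (i+1)"] wge[of i] m1 by linarith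
        show "w n (i + 1) \<le> w n i \<Longrightarrow>
          0 \<le> Wflux V (w n i) - Wflux V (w n (i + 1)) \<and>
          Wflux V (w n i) - Wflux V (w n (i + 1)) \<le> L * (w n i - w n (i + 1))"
          using W[of "w n (i+1)" "w n i"] wge[of "i+1"] m1 by linarith
      qed
      then show "m \<le> y (Suc n) i \<and> y (Suc n) i \<le> M"
        unfolding y_step lam_def by simp
    qed
  qed
  then show ?thesis unfolding m_def M_def by blast
qed


end
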